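(* Suppose actions are chosen by contextual GP-TS-SDF: given $\mathcal{F}_{t-1}$, sample $g_t\sim\mathcal{GP}(\mu_{t-1}(\cdot,\cdot),\nu_t^2\sigma^2_{t-1}(\cdot,\cdot))$ and select $x_t\in\arg\max_{x\in\mathcal{Q}}g_t(z_t,x)$ for the given context $z_t$. Let $r_t=g(z_t,x_t^\star)-g(z_t,x_t)$ with $x_t^\star\in\arg\max_{x\in\mathcal{Q}}g(z_t,x)$. For any filtration $\mathcal{F}_{t-1}$ and given context $z_t$, conditioned on the event $E^f(t)$, $$\mathbb{E}[r_t\mid\mathcal{F}_{t-1}]\le\frac{11c_t}{\rho_mp}\mathbb{E}[\sigma_{t-1}(z_t,x_t)\mid\mathcal{F}_{t-1}]+\frac{2\mathcal{B}_f}{t^2},\qquad p=\frac{1}{4e\sqrt{\pi}}.$$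
   Context: Setting (contextual GP bandits with delayed feedback). $\mathcal{Q}\subset\mathbb{R}^n$ finite action set, $\mathcal{Z}\subset\mathbb{R}^{n'}$ finite context set. $k$ a positive semidefinite kernel on $\mathcal{Z}\times\mathcal{Q}$ with $k\le1$; $g$ in its RKHS with $\|g\|_k\le\mathcal{B}_f$. In round $t$ the environment gives a context $z_t$, the learner selects $x_t\in\mathcal{Q}$ and gets $y_t=g(z_t,x_t)+\epsilon_t$ ($R$-sub-Gaussian $\epsilon_t$, $|y_t|\le\mathcal{B}_y$), observed after a random delay $d_t\in\{0,1,\ldots\}$ drawn from $\mathcal{D}$. For an integer $m\ge1$, $\rho_m=\mathbb{P}(d_s\le m)$, $\tilde y_{s,t}=y_s\mathbb{1}\{d_s\le\min(m,t-s)\}$. With $\lambda>0$, $w_i=(z_i,x_i)$, $w=(z,x)$: $\mu_{t-1}(w)=\mathbf{k}_{t-1}(w)^\top(\mathbf{K}_{t-1}+\lambda I)^{-1}\tilde{\mathbf{y}}_{t-1}$, $\sigma^2_{t-1}(w,w')=k(w,w')-\mathbf{k}_{t-1}(w)^\top(\mathbf{K}_{t-1}+\lambda I)^{-1}\mathbf{k}_{t-1}(w')$, $\sigma^2_{t-1}(w)=\sigma^2_{t-1}(w,w)$, $\mathbf{k}_{t-1}(w)=(k(w,w_i))_{i\le t-1}$, $\mathbf{K}_{t-1}=(k(w_i,w_j))_{i,j\le t-1}$, $\tilde{\mathbf{y}}_{t-1}=(\tilde y_{s,t})_{s\le t-1}$. $\gamma_t=\max_A\frac12\log\det(I+\lambda^{-1}\mathbf{K}_A)$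 over collections of $t$ points of $\mathcal{Z}\times\mathcal{Q}$. For $\delta\in(0,1)$: $\beta_t=\mathcal{B}_f+(R+\mathcal{B}_y)\sqrt{2(\gamma_{t-1}+1+\log(4/\delta))}$, $\nu_t=\mathcal{B}_y\sum_{s=t-m}^{t-1}\sigma_{t-1}(z_s,x_s)+\beta_t$ (terms with $s<1$ omitted), $c_t=\nu_t(1+\sqrt{2\log(|\mathcal{Z}||\mathcal{Q}|t^2)})$. $\mathcal{F}_{t-1}$: history up to round $t-1$. $E^f(t)$: the event that $|\mu_{t-1}(z,x)-\rho_mg(z,x)|\le\nu_t\sigma_{t-1}(z,x)$ for all $z\in\mathcal{Z},x\in\mathcal{Q}$. *)

theory Defs
  imports "HOL-Probability.Probability" "Jordan_Normal_Form.Gauss_Jordan_Elimination"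
    "Jordan_Normal_Form.Determinant"
begin

definition psd_kernel :: "'w set \<Rightarrow> ('w \<Rightarrow> 'w \<Rightarrow> real) \<Rightarrow> bool" where
  "psd_kernel W k \<longleftrightarrow> (\<forall>u\<in>W. \<forall>v\<in>W. k u v = k v u) \<and>
     (\<forall>ws :: 'w list. \<forall>a :: nat \<Rightarrow> real. set ws \<subseteq> W \<longrightarrow>
        (\<Sum>i<length ws. \<Sum>j<length ws. a i * a j * k (ws ! i) (ws ! j)) \<ge> 0)"

text \<open>On a finite domain W the RKHS of k is the span of the kernel sections
  k(.,v), v in W, with squared norm of sum_v alpha_v k(.,v) equal to
  sum_{u,v} alpha_u alpha_v k(u,v).  "g in H_k with norm at most B" (as a function on W).\<close>
definition rkhs_norm_le :: "'w set \<Rightarrow> ('w \<Rightarrow> 'w \<Rightarrow> real) \<Rightarrow> ('w \<Rightarrow> real) \<Rightarrow> real \<Rightarrow> bool" where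
  "rkhs_norm_le W k g B \<longleftrightarrow> (\<exists>\<alpha> :: 'w \<Rightarrow> real.
      (\<forall>w\<in>W. g w = (\<Sum>v\<in>W. \<alpha> v * k w v)) \<and>
      sqrt (\<Sum>u\<in>W. \<Sum>v\<in>W. \<alpha> u * \<alpha> v * k u v) \<le> B)"

text \<open>Data points ws (list, entry i is w_{i+1}); kernel matrix and vector.\<close>
definition kmat :: "('w \<Rightarrow> 'w \<Rightarrow> real) \<Rightarrow> 'w list \<Rightarrow> real mat" where
  "kmat k ws = mat (length ws) (length ws) (\<lambda>(i, j). k (ws ! i) (ws ! j))"

definition kvec :: "('w \<Rightarrow> 'w \<Rightarrow> real) \<Rightarrow> 'w list \<Rightarrow> 'w \<Rightarrow> real vec" where
  "kvec k ws w = vec (length ws) (\<lambda>i. k w (ws ! i))"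

text \<open>(K + lambda I)^{-1}; this matrix is invertible for lambda > 0 and psd K.\<close>
definition reg_inv :: "('w \<Rightarrow> 'w \<Rightarrow> real) \<Rightarrow> real \<Rightarrow> 'w list \<Rightarrow> real mat" where
  "reg_inv k lam ws = the (mat_inverse (kmat k ws + lam \<cdot>\<^sub>m 1\<^sub>m (length ws)))"

definition post_mean :: "('w \<Rightarrow> 'w \<Rightarrow> real) \<Rightarrow> real \<Rightarrow> 'w list \<Rightarrow> real list \<Rightarrow> 'w \<Rightarrow> real" where
  "post_mean k lam ws ys w = kvec k ws w \<bullet> (reg_inv k lam ws *\<^sub>v vec_of_list ys)"

definition post_cov :: "('w \<Rightarrow> 'w \<Rightarrow> real) \<Rightarrow> real \<Rightarrow> 'w list \<Rightarrow> 'w \<Rightarrow> 'w \<Rightarrow> real" where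
  "post_cov k lam ws w w' = k w w' - kvec k ws w \<bullet> (reg_inv k lam ws *\<^sub>v kvec k ws w')"

definition post_sd :: "('w \<Rightarrow> 'w \<Rightarrow> real) \<Rightarrow> real \<Rightarrow> 'w list \<Rightarrow> 'w \<Rightarrow> real" where
  "post_sd k lam ws w = sqrt (post_cov k lam ws w w)"

definition max_info_gain :: "'w set \<Rightarrow> ('w \<Rightarrow> 'w \<Rightarrow> real) \<Rightarrow> real \<Rightarrow> nat \<Rightarrow> real" where
  "max_info_gain W k lam t = Max {(1/2) * ln (det (1\<^sub>m t + (1 / lam) \<cdot>\<^sub>m kmat k A)) | A.
       set A \<subseteq> W \<and> length A = t}"

definition gaussian_rv :: "'a measure \<Rightarrow> ('a \<Rightarrow> real) \<Rightarrow> real \<Rightarrow> real \<Rightarrow> bool" where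
  "gaussian_rv M X m v \<longleftrightarrow> X \<in> borel_measurable M \<and>
     ((v = 0 \<and> (AE \<omega> in M. X \<omega> = m)) \<or>
      (v > 0 \<and> distributed M lborel X (normal_density m (sqrt v))))"

definition gaussian_process :: "'a measure \<Rightarrow> ('a \<Rightarrow> 'w \<Rightarrow> real) \<Rightarrow> 'w set \<Rightarrow>
    ('w \<Rightarrow> real) \<Rightarrow> ('w \<Rightarrow> 'w \<Rightarrow> real) \<Rightarrow> bool" where
  "gaussian_process M G W mu C \<longleftrightarrow>
     (\<forall>a :: 'w \<Rightarrow> real. gaussian_rv M (\<lambda>\<omega>. \<Sum>w\<in>W. a w * G \<omega> w)
        (\<Sum>w\<in>W. a w * mu w) (\<Sum>u\<in>W. \<Sum>v\<in>W. a u * a v * C u v))"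

text \<open>History w_1..w_{t-1} (round s stored at list index s-1).\<close>
definition hist :: "(nat \<Rightarrow> 'z) \<Rightarrow> (nat \<Rightarrow> 'q) \<Rightarrow> nat \<Rightarrow> ('z \<times> 'q) list" where
  "hist zh xh t = map (\<lambda>s. (zh s, xh s)) [1..<t]"

definition tilde_obs :: "(nat \<Rightarrow> real) \<Rightarrow> (nat \<Rightarrow> nat) \<Rightarrow> nat \<Rightarrow> nat \<Rightarrow> real list" where
  "tilde_obs y d m t = map (\<lambda>s. if d s \<le> min m (t - s) then y s else 0) [1..<t]"

definition beta_t :: "'w set \<Rightarrow> ('w \<Rightarrow> 'w \<Rightarrow> real) \<Rightarrow> real \<Rightarrow> real \<Rightarrow> real \<Rightarrow> real \<Rightarrow> real \<Rightarrow> nat \<Rightarrow> real" where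
  "beta_t W k lam Bf R By \<delta> t =
     Bf + (R + By) * sqrt (2 * (max_info_gain W k lam (t - 1) + 1 + ln (4 / \<delta>)))"

definition nu_t :: "'z set \<Rightarrow> 'q set \<Rightarrow> ('z \<times> 'q \<Rightarrow> 'z \<times> 'q \<Rightarrow> real) \<Rightarrow> real \<Rightarrow> real \<Rightarrow> real
    \<Rightarrow> real \<Rightarrow> real \<Rightarrow> (nat \<Rightarrow> 'z) \<Rightarrow> (nat \<Rightarrow> 'q) \<Rightarrow> nat \<Rightarrow> nat \<Rightarrow> real" where
  "nu_t Z Q k lam Bf R By \<delta> zh xh m t =
     By * (\<Sum>s\<in>{s. 1 \<le> s \<and> t - m \<le> s \<and> s \<le> t - 1 \<and> s < t}.
             post_sd k lam (hist zh xh t) (zh s, xh s))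
     + beta_t (Z \<times> Q) k lam Bf R By \<delta> t"

end

theory Submission
  imports Defs "HOL-Analysis.Harmonic_Numbers" "HOL-Real_Asymp.Real_Asymp"
begin


lemma std_tail_nn:
  fixes a :: real assumes a: "a > 0"
  shows "(\<integral>\<^sup>+x. ennreal (std_normal_density x) * indicator {a<..} x \<partial>lborel)
     \<le> ennreal (exp (-a\<^sup>2/2) / (a * sqrt (2*pi)))"
proof -
  define f where "f x = x * exp (-x\<^sup>2/2) / (a * sqrt (2*pi))" for x :: real
  define F where "F x = - exp (-x\<^sup>2/2) / (a * sqrt (2*pi))" for x :: real
  have "(\<integral>\<^sup>+x. ennreal (std_normal_density x) * indicator {a<..} x \<partial>lborel)
      \<le> (\<integral>\<^sup>+x. ennreal (f x) * indicator {a..} x \<partial>lborel)"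
  proof (rule nn_integral_mono)
    fix x :: real
    show "ennreal (std_normal_density x) * indicator {a<..} x \<le> ennreal (f x) * indicator {a..} x"
    proof (cases "a < x")
      case True
      have "std_normal_density x \<le> f x"
        unfolding std_normal_density_def f_def using a True
        by (simp add: field_simps)
      then show ?thesis using True by (simp add: indicator_def ennreal_leI)
    qed (simp add: indicator_def)
  qed
  also have "\<dots> = 0 - F a"
  proof (rule nn_integral_FTC_atLeast)
    show "f \<in> borel_measurable borel" unfolding f_def by measurable
    fix x assume "a \<le> x"
    show "DERIV F x :> f x" unfolding F_def f_def using a
      by (auto intro!: derivative_eq_intros simp: field_simps power2_eq_square)
    show "0 \<le> f x" unfolding f_def using a \<open>a \<le> x\<close> by simp
  next
    have "((\<lambda>x::real. exp (-x\<^sup>2/2)) \<longlongrightarrow> 0) at_top" by real_asymp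
    then have "((\<lambda>x::real. - exp (-x\<^sup>2/2) / (a * sqrt (2*pi))) \<longlongrightarrow> - 0 / (a * sqrt (2*pi))) at_top"
      using a by (intro tendsto_divide tendsto_minus tendsto_const) auto
    then show "(F \<longlongrightarrow> 0) at_top" unfolding F_def by simp
  qed
  also have "\<dots> = ennreal (exp (-a\<^sup>2/2) / (a * sqrt (2*pi)))" unfolding F_def by simp
  finally show ?thesis .
qed

lemma std_density_mono:
  assumes "0 \<le> x" "x \<le> y" shows "std_normal_density y \<le> std_normal_density x"
proof -
  have "x\<^sup>2 \<le> y\<^sup>2" using assms by (intro power_mono) auto
  then have "exp (- y\<^sup>2 / 2) \<le> exp (- x\<^sup>2 / 2)" by simp
  then show ?thesis unfolding std_normal_density_def by (intro mult_left_mono) auto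
qed

lemma numeric_q0: "(0.088::real) \<le> std_normal_density (3/2) / 2 + std_normal_density 2 / 2"
proof -
  have e1: "exp 1 \<le> (2.72::real)" using e_less_272 by simp
  have e8: "exp (1/8) \<le> (8/7::real)"
  proof -
    have "1 + (-1/8) \<le> exp (-1/8::real)" by (rule exp_ge_add_one_self)
    then have "7 * exp (1/8::real) \<le> 8 * exp (-1/8) * exp (1/8)"
      by (intro mult_right_mono) auto
    also have "\<dots> = 8" by (simp add: mult.assoc exp_add[symmetric])
    finally show ?thesis by simp
  qed
  have "exp (9/8::real) = exp 1 * exp (1/8)" by (simp add: exp_add[symmetric])
  also have "\<dots> \<le> 2.72 * (8/7)" using e1 e8 by (intro mult_mono) auto
  finally have a1: "exp (9/8::real) \<le> 2.72 * (8/7)" .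
  have "exp (2::real) = exp 1 * exp 1" by (simp add: exp_add[symmetric])
  also have "\<dots> \<le> 2.72 * 2.72" using e1 by (intro mult_mono) auto
  finally have a2: "exp (2::real) \<le> 2.72 * 2.72" .
  have b1: "exp (-(3/2)\<^sup>2/2::real) = 1 / exp (9/8)" by (simp add: exp_minus power2_eq_square field_simps)
  have b2: "exp (-(2::real)\<^sup>2/2) = 1 / exp 2" by (simp add: exp_minus power2_eq_square field_simps)
  have c1: "1 / exp (9/8::real) \<ge> 1 / (2.72 * (8/7))" using a1 by (intro divide_left_mono) auto
  have c2: "1 / exp (2::real) \<ge> 1 / (2.72 * 2.72)" using a2 by (intro divide_left_mono) auto
  have pi: "sqrt (2 * pi) \<le> 2.51"
  proof -
    have "2 * pi \<le> 2.51\<^sup>2" using pi_approx by (simp add: power2_eq_square)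
    then have "sqrt (2 * pi) \<le> sqrt (2.51\<^sup>2)" by (rule real_sqrt_le_mono)
    then show ?thesis by simp
  qed
  have sp: "sqrt (2*pi) > 0" by simp
  have "std_normal_density (3/2) / 2 + std_normal_density 2 / 2 = (1 / exp (9/8) + 1 / exp 2) / (2 * sqrt (2*pi))"
  proof -
    have "std_normal_density (3/2) = exp (-(3/2)\<^sup>2/2) / sqrt (2*pi)" unfolding std_normal_density_def by simp
    also have "\<dots> = (1 / exp (9/8)) / sqrt (2*pi)" unfolding b1 ..
    finally have d1: "std_normal_density (3/2) = (1 / exp (9/8)) / sqrt (2*pi)" .
    have "std_normal_density 2 = exp (-(2::real)\<^sup>2/2) / sqrt (2*pi)" unfolding std_normal_density_def by simp
    also have "\<dots> = (1 / exp 2) / sqrt (2*pi)" unfolding b2 ..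
    finally have d2: "std_normal_density 2 = (1 / exp 2) / sqrt (2*pi)" .
    show ?thesis unfolding d1 d2 by (simp add: field_simps)
  qed
  also have "\<dots> \<ge> (1 / (2.72 * (8/7)) + 1 / (2.72 * 2.72)) / (2 * 2.51)"
  proof (rule frac_le)
    show "0 \<le> 1 / exp (9/8::real) + 1 / exp 2" by simp
    show "1 / (2.72 * (8/7)) + 1 / (2.72 * 2.72) \<le> 1 / exp (9/8::real) + 1 / exp 2" using c1 c2 by linarith
    show "0 < 2 * sqrt (2*pi)" using sp by linarith
    show "2 * sqrt (2*pi) \<le> 2 * (2.51::real)" using pi by linarith
  qed
  finally show ?thesis by simp
qed

lemma std_anti_nn:
  "ennreal 0.088 \<le> (\<integral>\<^sup>+x. ennreal (std_normal_density x) * indicator {1..} x \<partial>lborel)"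
proof -
  have "(\<integral>\<^sup>+x. ennreal (std_normal_density (3/2)) * indicator {1..3/2::real} x + ennreal (std_normal_density 2) * indicator {3/2<..2::real} x \<partial>lborel)
     \<le> (\<integral>\<^sup>+x. ennreal (std_normal_density x) * indicator {1..} x \<partial>lborel)"
  proof (rule nn_integral_mono)
    fix x :: real
    show "ennreal (std_normal_density (3/2)) * indicator {1..3/2} x + ennreal (std_normal_density 2) * indicator {3/2<..2} x
      \<le> ennreal (std_normal_density x) * indicator {1..} x"
    proof (cases "x \<in> {1..3/2}")
      case True
      then show ?thesis using std_density_mono[of x "3/2"] by (auto simp: indicator_def ennreal_leI)
    next
      case F: False
      show ?thesis
      proof (cases "x \<in> {3/2<..2}")
        case True
        then show ?thesis using F std_density_mono[of x 2] by (auto simp: indicator_def ennreal_leI)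
      qed (use F in \<open>auto simp: indicator_def\<close>)
    qed
  qed
  moreover have "(\<integral>\<^sup>+x. ennreal (std_normal_density (3/2)) * indicator {1..3/2::real} x + ennreal (std_normal_density 2) * indicator {3/2<..2::real} x \<partial>lborel)
     = ennreal (std_normal_density (3/2) / 2 + std_normal_density 2 / 2)"
  proof -
    have m1: "emeasure lborel {1..3/2::real} = ennreal (1/2)" by simp
    have m2: "emeasure lborel {3/2<..2::real} = ennreal (1/2)" by simp
    have "(\<integral>\<^sup>+x. ennreal (std_normal_density (3/2)) * indicator {1..3/2::real} x + ennreal (std_normal_density 2) * indicator {3/2<..2::real} x \<partial>lborel)
      = ennreal (std_normal_density (3/2)) * emeasure lborel {1..3/2::real} + ennreal (std_normal_density 2) * emeasure lborel {3/2<..2::real}"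
      by (subst nn_integral_add, measurable, measurable, auto simp only: nn_integral_cmult_indicator sets_lborel atLeastAtMost_borel greaterThanAtMost_borel)
    also have "\<dots> = ennreal (std_normal_density (3/2) * (1/2)) + ennreal (std_normal_density 2 * (1/2))"
      unfolding m1 m2 by (simp only: ennreal_mult[symmetric] normal_density_nonneg)
    also have "\<dots> = ennreal (std_normal_density (3/2) / 2 + std_normal_density 2 / 2)"
      by (subst ennreal_plus[symmetric]) auto
    finally show ?thesis .
  qed
  moreover have "ennreal 0.088 \<le> ennreal (std_normal_density (3/2) / 2 + std_normal_density 2 / 2)"
    using numeric_q0 by (rule ennreal_leI)
  ultimately show ?thesis by simp
qed

lemma (in prob_space) std_tail_prob:
  assumes N: "distributed M lborel N std_normal_density" and a: "a > 0"
  shows "prob {\<omega>\<in>space M. a < N \<omega>} \<le> exp (-a\<^sup>2/2) / (a * sqrt (2*pi))"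
proof -
  have "emeasure M (N -` {a<..} \<inter> space M) = (\<integral>\<^sup>+x. ennreal (std_normal_density x) * indicator {a<..} x \<partial>lborel)"
    using distributed_emeasure[OF N] by simp
  also have "\<dots> \<le> ennreal (exp (-a\<^sup>2/2) / (a * sqrt (2*pi)))" by (rule std_tail_nn[OF a])
  finally have "ennreal (prob (N -` {a<..} \<inter> space M)) \<le> ennreal (exp (-a\<^sup>2/2) / (a * sqrt (2*pi)))"
    by (simp add: emeasure_eq_measure)
  moreover have "N -` {a<..} \<inter> space M = {\<omega>\<in>space M. a < N \<omega>}" by auto
  moreover have "0 \<le> exp (-a\<^sup>2/2) / (a * sqrt (2*pi))" using a by simp
  ultimately show ?thesis by (metis ennreal_le_iff)
qed

lemma (in prob_space) std_anti_prob:
  assumes N: "distributed M lborel N std_normal_density"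
  shows "0.088 \<le> prob {\<omega>\<in>space M. 1 \<le> N \<omega>}"
proof -
  have "ennreal 0.088 \<le> (\<integral>\<^sup>+x. ennreal (std_normal_density x) * indicator {1..} x \<partial>lborel)"
    by (rule std_anti_nn)
  also have "\<dots> = emeasure M (N -` {1..} \<inter> space M)"
    using distributed_emeasure[OF N] by simp
  finally have "ennreal 0.088 \<le> ennreal (prob (N -` {1..} \<inter> space M))"
    by (simp add: emeasure_eq_measure)
  moreover have "N -` {1..} \<inter> space M = {\<omega>\<in>space M. 1 \<le> N \<omega>}" by auto
  ultimately show ?thesis by (metis ennreal_le_iff measure_nonneg)
qed



lemma sum_delta_l:
  assumes "finite W" "w \<in> W"
  shows "(\<Sum>u\<in>W. (if u = w then c else 0) * f u) = c * (f w :: real)"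
proof -
  have "(\<Sum>u\<in>W. (if u = w then c else 0) * f u) = (\<Sum>u\<in>W. if u = w then c * f u else 0)"
    by (rule sum.cong) auto
  then show ?thesis using assms by simp
qed

lemma sum_delta_r:
  assumes "finite W" "w \<in> W"
  shows "(\<Sum>u\<in>W. f u * (if u = w then c else 0)) = f w * (c :: real)"
proof -
  have "(\<Sum>u\<in>W. f u * (if u = w then c else 0)) = (\<Sum>u\<in>W. if u = w then f u * c else 0)"
    by (rule sum.cong) auto
  then show ?thesis using assms by simp
qed

lemma gp_point:
  assumes gp: "gaussian_process M G W mu C" and fin: "finite W" and w: "w \<in> W"
  shows "gaussian_rv M (\<lambda>\<omega>. c * G \<omega> w) (c * mu w) (c\<^sup>2 * C w w)"
proof -
  define a where "a u = (if u = w then c else 0)" for u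
  have "gaussian_rv M (\<lambda>\<omega>. \<Sum>u\<in>W. a u * G \<omega> u) (\<Sum>u\<in>W. a u * mu u) (\<Sum>u\<in>W. \<Sum>v\<in>W. a u * a v * C u v)"
    using gp unfolding gaussian_process_def by blast
  moreover have "\<And>\<omega>. (\<Sum>u\<in>W. a u * G \<omega> u) = c * G \<omega> w" unfolding a_def using fin w
    by (rule sum_delta_l)
  moreover have "(\<Sum>u\<in>W. a u * mu u) = c * mu w" unfolding a_def using fin w
    by (rule sum_delta_l)
  moreover have "(\<Sum>u\<in>W. \<Sum>v\<in>W. a u * a v * C u v) = c\<^sup>2 * C w w"
  proof -
    have "(\<Sum>u\<in>W. \<Sum>v\<in>W. a u * a v * C u v) = (\<Sum>u\<in>W. a u * (\<Sum>v\<in>W. a v * C u v))"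
      by (simp add: sum_distrib_left mult.assoc)
    also have "\<dots> = (\<Sum>u\<in>W. a u * (c * C u w))" unfolding a_def using fin w
      by (intro sum.cong refl arg_cong2[where f="(*)"] sum_delta_l)
    also have "\<dots> = c * (c * C w w)" unfolding a_def using fin w by (rule sum_delta_l)
    finally show ?thesis by (simp add: power2_eq_square)
  qed
  ultimately show ?thesis by simp
qed

lemma gauss_upper:
  assumes P: "prob_space M" and g: "gaussian_rv M Y m (\<tau>\<^sup>2)" and tau: "\<tau> \<ge> 0" and a: "a > 0"
  shows "measure M {\<omega>\<in>space M. m + a * \<tau> < Y \<omega>} \<le> exp (-a\<^sup>2/2) / (a * sqrt (2*pi))"
proof -
  interpret prob_space M by (rule P)
  have bnd: "0 \<le> exp (-a\<^sup>2/2) / (a * sqrt (2*pi))" using a by simp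
  show ?thesis
  proof (cases "\<tau> = 0")
    case True
    then have "AE \<omega> in M. Y \<omega> = m" using g unfolding gaussian_rv_def by auto
    then have "AE \<omega> in M. \<not> (m + a * \<tau> < Y \<omega>)" using True by auto
    then have "emeasure M {\<omega>\<in>space M. m + a * \<tau> < Y \<omega>} = 0" by (rule emeasure_eq_0_AE)
    then have "measure M {\<omega>\<in>space M. m + a * \<tau> < Y \<omega>} = 0" by (simp add: measure_def)
    then show ?thesis using bnd by simp
  next
    case False
    then have tp: "\<tau> > 0" using tau by simp
    then have "distributed M lborel Y (normal_density m (sqrt (\<tau>\<^sup>2)))" using g unfolding gaussian_rv_def by auto
    then have "distributed M lborel Y (normal_density m \<tau>)" using tau by simp
    then have N: "distributed M lborel (\<lambda>x. (Y x - m) / \<tau>) std_normal_density"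
      using normal_standard_normal_convert[OF tp] by simp
    have "{\<omega>\<in>space M. m + a * \<tau> < Y \<omega>} = {\<omega>\<in>space M. a < (Y \<omega> - m) / \<tau>}"
      using tp by (auto simp: pos_less_divide_eq algebra_simps)
    then show ?thesis using std_tail_prob[OF N a] by simp
  qed
qed

lemma gauss_anti:
  assumes P: "prob_space M" and g: "gaussian_rv M Y m (\<tau>\<^sup>2)" and tau: "\<tau> \<ge> 0"
  shows "0.088 \<le> measure M {\<omega>\<in>space M. m + \<tau> \<le> Y \<omega>}"
proof -
  interpret prob_space M by (rule P)
  have Ym: "Y \<in> borel_measurable M" using g unfolding gaussian_rv_def by auto
  show ?thesis
  proof (cases "\<tau> = 0")
    case True
    then have "AE \<omega> in M. Y \<omega> = m" using g unfolding gaussian_rv_def by auto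
    then have "AE \<omega> in M. \<omega> \<in> {\<omega>\<in>space M. m + \<tau> \<le> Y \<omega>}" using True by auto
    moreover have "{\<omega>\<in>space M. m + \<tau> \<le> Y \<omega>} \<in> sets M" using Ym by measurable
    ultimately have "prob {\<omega>\<in>space M. m + \<tau> \<le> Y \<omega>} = 1" using prob_eq_1 by blast
    then show ?thesis by simp
  next
    case False
    then have tp: "\<tau> > 0" using tau by simp
    then have "distributed M lborel Y (normal_density m (sqrt (\<tau>\<^sup>2)))" using g unfolding gaussian_rv_def by auto
    then have "distributed M lborel Y (normal_density m \<tau>)" using tau by simp
    then have N: "distributed M lborel (\<lambda>x. (Y x - m) / \<tau>) std_normal_density"
      using normal_standard_normal_convert[OF tp] by simp
    have "{\<omega>\<in>space M. m + \<tau> \<le> Y \<omega>} = {\<omega>\<in>space M. 1 \<le> (Y \<omega> - m) / \<tau>}"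
      using tp by (auto simp: pos_le_divide_eq algebra_simps)
    then show ?thesis using std_anti_prob[OF N] by simp
  qed
qed

lemma psd_sum:
  assumes psd: "psd_kernel W k" and fin: "finite W"
  shows "0 \<le> (\<Sum>u\<in>W. \<Sum>v\<in>W. a u * a v * k u v)"
proof -
  obtain ws where ws: "set ws = W" "distinct ws" using finite_distinct_list[OF fin] by blast
  have bij: "bij_betw ((!) ws) {..<length ws} W" using ws by (intro bij_betw_nth) auto
  have "0 \<le> (\<Sum>i<length ws. \<Sum>j<length ws. a (ws!i) * a (ws!j) * k (ws ! i) (ws ! j))"
  proof -
    have "\<forall>ws a. set ws \<subseteq> W \<longrightarrow> 0 \<le> (\<Sum>i<length ws. \<Sum>j<length ws. a i * a j * k (ws ! i) (ws ! j))"
      using psd unfolding psd_kernel_def by blast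
    from this[rule_format, of ws "\<lambda>i. a (ws!i)"] show ?thesis using ws by simp
  qed
  also have "\<dots> = (\<Sum>u\<in>W. \<Sum>j<length ws. a u * a (ws!j) * k u (ws ! j))"
    by (rule sum.reindex_bij_betw[OF bij])
  also have "\<dots> = (\<Sum>u\<in>W. \<Sum>v\<in>W. a u * a v * k u v)"
    by (intro sum.cong refl sum.reindex_bij_betw[OF bij])
  finally show ?thesis .
qed

lemma rkhs_bound:
  assumes psd: "psd_kernel W k" and fin: "finite W" and k1: "\<forall>u\<in>W. \<forall>v\<in>W. k u v \<le> 1"
    and r: "rkhs_norm_le W k g B" and w: "w \<in> W"
  shows "\<bar>g w\<bar> \<le> B"
proof -
  obtain \<alpha> where ga: "\<forall>w\<in>W. g w = (\<Sum>v\<in>W. \<alpha> v * k w v)"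
    and sB: "sqrt (\<Sum>u\<in>W. \<Sum>v\<in>W. \<alpha> u * \<alpha> v * k u v) \<le> B"
    using r unfolding rkhs_norm_le_def by blast
  define A where "A = (\<Sum>u\<in>W. \<Sum>v\<in>W. \<alpha> u * \<alpha> v * k u v)"
  define \<gamma> where "\<gamma> = g w"
  have A0: "0 \<le> A" unfolding A_def by (rule psd_sum[OF psd fin])
  have sym: "\<And>u v. u \<in> W \<Longrightarrow> v \<in> W \<Longrightarrow> k u v = k v u" using psd unfolding psd_kernel_def by blast
  define \<beta> where "\<beta> u = \<alpha> u - (if u = w then \<gamma> else 0)" for u
  have Q0: "0 \<le> (\<Sum>u\<in>W. \<Sum>v\<in>W. \<beta> u * \<beta> v * k u v)" by (rule psd_sum[OF psd fin])
  have e1: "(\<Sum>u\<in>W. \<Sum>v\<in>W. \<beta> u * \<beta> v * k u v)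
     = A - (\<Sum>u\<in>W. \<Sum>v\<in>W. \<alpha> u * (if v = w then \<gamma> else 0) * k u v)
         - (\<Sum>u\<in>W. \<Sum>v\<in>W. (if u = w then \<gamma> else 0) * \<alpha> v * k u v)
         + (\<Sum>u\<in>W. \<Sum>v\<in>W. (if u = w then \<gamma> else 0) * (if v = w then \<gamma> else 0) * k u v)"
    unfolding A_def \<beta>_def by (simp add: algebra_simps sum.distrib sum_subtractf)
  have e2: "(\<Sum>u\<in>W. \<Sum>v\<in>W. \<alpha> u * (if v = w then \<gamma> else 0) * k u v) = \<gamma> * \<gamma>"
  proof -
    have "(\<Sum>u\<in>W. \<Sum>v\<in>W. \<alpha> u * (if v = w then \<gamma> else 0) * k u v) = (\<Sum>u\<in>W. \<gamma> * (\<alpha> u * k w u))"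
    proof (intro sum.cong refl)
      fix u assume u: "u \<in> W"
      have "(\<Sum>v\<in>W. \<alpha> u * (if v = w then \<gamma> else 0) * k u v) = (\<Sum>v\<in>W. (if v = w then \<gamma> else 0) * (\<alpha> u * k u v))"
        by (simp add: algebra_simps)
      also have "\<dots> = \<gamma> * (\<alpha> u * k u w)" using fin w by (rule sum_delta_l)
      finally show "(\<Sum>v\<in>W. \<alpha> u * (if v = w then \<gamma> else 0) * k u v) = \<gamma> * (\<alpha> u * k w u)"
        using sym[OF u w] by simp
    qed
    also have "\<dots> = \<gamma> * \<gamma>" using ga w unfolding \<gamma>_def by (simp add: sum_distrib_left)
    finally show ?thesis .
  qed
  have e3: "(\<Sum>u\<in>W. \<Sum>v\<in>W. (if u = w then \<gamma> else 0) * \<alpha> v * k u v) = \<gamma> * \<gamma>"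
  proof -
    have "(\<Sum>u\<in>W. \<Sum>v\<in>W. (if u = w then \<gamma> else 0) * \<alpha> v * k u v) = (\<Sum>v\<in>W. \<gamma> * (\<alpha> v * k w v))"
    proof -
      have "(\<Sum>u\<in>W. \<Sum>v\<in>W. (if u = w then \<gamma> else 0) * \<alpha> v * k u v) = (\<Sum>u\<in>W. (if u = w then \<gamma> else 0) * (\<Sum>v\<in>W. \<alpha> v * k u v))"
        by (simp add: sum_distrib_left mult.assoc)
      also have "\<dots> = \<gamma> * (\<Sum>v\<in>W. \<alpha> v * k w v)" using fin w by (rule sum_delta_l)
      finally show ?thesis by (simp add: sum_distrib_left)
    qed
    also have "\<dots> = \<gamma> * \<gamma>" using ga w unfolding \<gamma>_def by (simp add: sum_distrib_left)
    finally show ?thesis .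
  qed
  have e4: "(\<Sum>u\<in>W. \<Sum>v\<in>W. (if u = w then \<gamma> else 0) * (if v = w then \<gamma> else 0) * k u v) = \<gamma> * \<gamma> * k w w"
  proof -
    have "(\<Sum>u\<in>W. \<Sum>v\<in>W. (if u = w then \<gamma> else 0) * (if v = w then \<gamma> else 0) * k u v)
       = (\<Sum>u\<in>W. (if u = w then \<gamma> else 0) * (\<Sum>v\<in>W. (if v = w then \<gamma> else 0) * k u v))"
      by (simp add: sum_distrib_left mult.assoc)
    also have "\<dots> = (\<Sum>u\<in>W. (if u = w then \<gamma> else 0) * (\<gamma> * k u w))"
      using fin w by (intro sum.cong refl arg_cong2[where f="(*)"] sum_delta_l)
    also have "\<dots> = \<gamma> * (\<gamma> * k w w)" using fin w by (rule sum_delta_l)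
    finally show ?thesis by simp
  qed
  have "0 \<le> A - \<gamma> * \<gamma> * (2 - k w w)" using Q0 e1 e2 e3 e4 by (simp add: algebra_simps)
  moreover have "k w w \<le> 1" using k1 w by blast
  moreover have "0 \<le> \<gamma> * \<gamma>" by simp
  ultimately have "\<gamma> * \<gamma> * 1 \<le> \<gamma> * \<gamma> * (2 - k w w)"
    by (intro mult_left_mono) auto
  with \<open>0 \<le> A - \<gamma> * \<gamma> * (2 - k w w)\<close> have "\<gamma> * \<gamma> \<le> A" by linarith
  moreover have "A \<le> B\<^sup>2" using sB A0 unfolding A_def[symmetric]
    by (metis real_sqrt_le_iff real_sqrt_pow2 power_mono real_sqrt_ge_zero)
  ultimately have "\<gamma>\<^sup>2 \<le> B\<^sup>2" by (simp add: power2_eq_square)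
  moreover have "0 \<le> B" using sB A0 unfolding A_def[symmetric] using real_sqrt_ge_zero order_trans by blast
  ultimately show ?thesis unfolding \<gamma>_def using abs_le_square_iff by (metis abs_of_nonneg)
qed

lemma lin_comb:
  fixes L E C D B A R :: real
  shows "L \<le> E + C + D \<Longrightarrow> D \<le> B \<Longrightarrow> E \<le> 1000/9 * C \<Longrightarrow> (1000/9+1) * C \<le> A \<Longrightarrow> R = A + B \<Longrightarrow> L \<le> R"
proof -
  assume a: "L \<le> E + C + D" "D \<le> B" "E \<le> 1000/9 * C" "(1000/9+1) * C \<le> A" "R = A + B"
  have "(1000/9+1) * C = 1000/9 * C + C" by (simp add: algebra_simps)
  then show ?thesis using a by linarith
qed

lemma sets_less:
  fixes f :: "'a \<Rightarrow> real"
  assumes [measurable]: "f \<in> borel_measurable M"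
  shows "{\<omega>\<in>space M. a < f \<omega>} \<in> sets M"
proof -
  have "{\<omega>\<in>space M. a < f \<omega>} = f -` {a<..} \<inter> space M" by auto
  then show ?thesis using measurable_sets[OF assms borel_open[OF open_greaterThan]] by simp
qed

lemma sets_le:
  fixes f :: "'a \<Rightarrow> real"
  assumes [measurable]: "f \<in> borel_measurable M"
  shows "{\<omega>\<in>space M. a \<le> f \<omega>} \<in> sets M"
proof -
  have "{\<omega>\<in>space M. a \<le> f \<omega>} = f -` {a..} \<inter> space M" by auto
  then show ?thesis using measurable_sets[OF assms borel_closed[OF closed_atLeast]] by simp
qed

lemma integrable_fin:
  assumes P: "prob_space M" and X: "X \<in> measurable M (count_space UNIV)"
    and XQ: "\<forall>\<omega>\<in>space M. X \<omega> \<in> Q" and fin: "finite Q"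
  shows "integrable M (\<lambda>\<omega>. h (X \<omega>) :: real)"
proof -
  interpret prob_space M by (rule P)
  have m: "(\<lambda>\<omega>. h (X \<omega>)) \<in> borel_measurable M"
    using measurable_compose[OF X, of h borel] by simp
  show ?thesis
  proof (rule integrable_const_bound[where B = "\<Sum>x\<in>Q. \<bar>h x\<bar>"])
    show "AE \<omega> in M. norm (h (X \<omega>)) \<le> (\<Sum>x\<in>Q. \<bar>h x\<bar>)"
      using XQ fin by (auto intro!: AE_I2 member_le_sum)
  qed (rule m)
qed



theorem lemma11:
  fixes Z :: "(real ^ 'a) set" and Q :: "(real ^ 'b) set"
    and k :: "(real ^ 'a) \<times> (real ^ 'b) \<Rightarrow> (real ^ 'a) \<times> (real ^ 'b) \<Rightarrow> real"
    and g :: "(real ^ 'a) \<times> (real ^ 'b) \<Rightarrow> real"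
    and Bf By R lam \<delta> :: real
    and D :: "nat pmf" and m t :: nat
    and zh :: "nat \<Rightarrow> real ^ 'a" and xh :: "nat \<Rightarrow> real ^ 'b"
    and y :: "nat \<Rightarrow> real" and d :: "nat \<Rightarrow> nat"
    and z :: "real ^ 'a" and xstar :: "real ^ 'b"
    and M :: "'o measure" and G :: "'o \<Rightarrow> (real ^ 'a) \<times> (real ^ 'b) \<Rightarrow> real"
    and X :: "'o \<Rightarrow> real ^ 'b"
  defines "\<rho> \<equiv> measure_pmf.prob D {..m}"
    and "\<mu> \<equiv> post_mean k lam (hist zh xh t) (tilde_obs y d m t)"
    and "\<sigma> \<equiv> post_sd k lam (hist zh xh t)"
    and "\<nu> \<equiv> nu_t Z Q k lam Bf R By \<delta> zh xh m t"
    and "p \<equiv> 1 / (4 * exp 1 * sqrt pi)"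
  assumes "finite Z" "Z \<noteq> {}" "finite Q" "Q \<noteq> {}"
    and "psd_kernel (Z \<times> Q) k" "\<forall>u\<in>(Z \<times> Q). \<forall>v\<in>(Z \<times> Q). k u v \<le> 1"
    and "rkhs_norm_le (Z \<times> Q) k g Bf"
    and "lam > 0" "By \<ge> 0" "0 < \<delta>" "\<delta> < 1" "R \<ge> 0"
    and "m \<ge> 1" "t \<ge> 1" "\<rho> > 0"
    and "\<forall>s\<in>{1..<t}. zh s \<in> Z \<and> xh s \<in> Q \<and> \<bar>y s\<bar> \<le> By"
    \<comment> \<open>given context and optimal action\<close>
    and "z \<in> Z" "xstar \<in> Q" "\<forall>x\<in>Q. g (z, x) \<le> g (z, xstar)"
    \<comment> \<open>event E^f(t)\<close>
    and "\<forall>w\<in>(Z \<times> Q). \<bar>\<mu> w - \<rho> * g w\<bar> \<le> \<nu> * \<sigma> w"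
    \<comment> \<open>GP-TS sampling and action selection, conditionally on the history\<close>
    and "prob_space M"
    and "gaussian_process M G (Z \<times> Q) \<mu> (\<lambda>u v. \<nu>\<^sup>2 * post_cov k lam (hist zh xh t) u v)"
    and "X \<in> measurable M (count_space UNIV)"
    and "\<forall>\<omega>\<in>space M. X \<omega> \<in> Q \<and> (\<forall>x\<in>Q. G \<omega> (z, x) \<le> G \<omega> (z, X \<omega>))"
  shows "(\<integral>\<omega>. g (z, xstar) - g (z, X \<omega>) \<partial>M)
      \<le> 11 * (\<nu> * (1 + sqrt (2 * ln (real (card Z) * real (card Q) * real t ^ 2)))) / (\<rho> * p) * (\<integral>\<omega>. \<sigma> (z, X \<omega>) \<partial>M) + 2 * Bf / real t ^ 2"
proof -
  interpret P: prob_space M by (rule \<open>prob_space M\<close>)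
  define W where "W = Z \<times> Q"
  have finW: "finite W" unfolding W_def using \<open>finite Z\<close> \<open>finite Q\<close> by simp
  have zx: "\<And>x. x \<in> Q \<Longrightarrow> (z, x) \<in> W" unfolding W_def using \<open>z \<in> Z\<close> by simp
  have gb: "\<And>w. w \<in> W \<Longrightarrow> \<bar>g w\<bar> \<le> Bf"
    unfolding W_def using rkhs_bound[OF \<open>psd_kernel (Z \<times> Q) k\<close> _ \<open>\<forall>u\<in>(Z \<times> Q). \<forall>v\<in>(Z \<times> Q). k u v \<le> 1\<close> \<open>rkhs_norm_le (Z \<times> Q) k g Bf\<close>]
      \<open>finite Z\<close> \<open>finite Q\<close> by simp
  have Bf0: "0 \<le> Bf" using gb[OF zx[OF \<open>xstar \<in> Q\<close>]] by linarith
  have rho1: "\<rho> \<le> 1" unfolding \<rho>_def by simp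
  have rho0: "0 < \<rho>" by fact
  define pc where "pc w = post_cov k lam (hist zh xh t) w w" for w
  have sig: "\<And>w. \<sigma> w = sqrt (pc w)" unfolding \<sigma>_def pc_def post_sd_def by simp
  have gpw: "\<And>w c. w \<in> W \<Longrightarrow> gaussian_rv M (\<lambda>\<omega>. c * G \<omega> w) (c * \<mu> w) (c\<^sup>2 * (\<nu>\<^sup>2 * pc w))"
    unfolding pc_def W_def
    by (rule gp_point[OF \<open>gaussian_process M G (Z \<times> Q) \<mu> (\<lambda>u v. \<nu>\<^sup>2 * post_cov k lam (hist zh xh t) u v)\<close>])
       (use \<open>finite Z\<close> \<open>finite Q\<close> in auto)
  have gp1: "\<And>w. w \<in> W \<Longrightarrow> gaussian_rv M (\<lambda>\<omega>. G \<omega> w) (\<mu> w) (\<nu>\<^sup>2 * pc w)"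
    using gpw[of _ 1] by simp
  have Gm: "\<And>w. w \<in> W \<Longrightarrow> (\<lambda>\<omega>. G \<omega> w) \<in> borel_measurable M"
    using gp1 unfolding gaussian_rv_def by blast
  have var0: "\<And>w. w \<in> W \<Longrightarrow> 0 \<le> \<nu>\<^sup>2 * pc w"
    using gp1 unfolding gaussian_rv_def by force
  have Ef: "\<And>w. w \<in> W \<Longrightarrow> \<bar>\<mu> w - \<rho> * g w\<bar> \<le> \<nu> * \<sigma> w"
    using \<open>\<forall>w\<in>(Z \<times> Q). \<bar>\<mu> w - \<rho> * g w\<bar> \<le> \<nu> * \<sigma> w\<close> unfolding W_def by blast
  have Xm: "X \<in> measurable M (count_space UNIV)" by fact
  have XQ: "\<forall>\<omega>\<in>space M. X \<omega> \<in> Q" using \<open>\<forall>\<omega>\<in>space M. X \<omega> \<in> Q \<and> (\<forall>x\<in>Q. G \<omega> (z, x) \<le> G \<omega> (z, X \<omega>))\<close> by blast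
  have Xmax: "\<And>\<omega> x. \<omega> \<in> space M \<Longrightarrow> x \<in> Q \<Longrightarrow> G \<omega> (z, x) \<le> G \<omega> (z, X \<omega>)"
    using \<open>\<forall>\<omega>\<in>space M. X \<omega> \<in> Q \<and> (\<forall>x\<in>Q. G \<omega> (z, x) \<le> G \<omega> (z, X \<omega>))\<close> by blast
  have gmax: "\<And>x. x \<in> Q \<Longrightarrow> g (z, x) \<le> g (z, xstar)" using \<open>\<forall>x\<in>Q. g (z, x) \<le> g (z, xstar)\<close> by blast
  have intf: "\<And>h. integrable M (\<lambda>\<omega>. h (X \<omega>) :: real)"
    by (rule integrable_fin[OF \<open>prob_space M\<close> Xm XQ \<open>finite Q\<close>])
  define cp where "cp = sqrt (2 * ln (real (card Z) * real (card Q) * real t ^ 2))"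
  define cc where "cc = \<nu> * (1 + cp)"
  have cardZ: "1 \<le> card Z" using \<open>finite Z\<close> \<open>Z \<noteq> {}\<close> by (simp add: Suc_le_eq card_gt_0_iff)
  have cardQ: "1 \<le> card Q" using \<open>finite Q\<close> \<open>Q \<noteq> {}\<close> by (simp add: Suc_le_eq card_gt_0_iff)
  have nt1: "1 \<le> real (card Z) * real (card Q) * real t ^ 2"
  proof -
    have "1 \<le> real (card Z)" "1 \<le> real (card Q)" "1 \<le> real t ^ 2" using cardZ cardQ \<open>t \<ge> 1\<close> by auto
    then have "1 * 1 \<le> real (card Z) * real (card Q)" by (intro mult_mono) auto
    then have "1 * 1 \<le> (real (card Z) * real (card Q)) * real t ^ 2"
      using \<open>1 \<le> real t ^ 2\<close> by (intro mult_mono) auto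
    then show ?thesis by simp
  qed
  have cp0: "0 \<le> cp" unfolding cp_def using nt1 by simp
  have p0: "0 < p" unfolding p_def by simp
  have goal_eq: "11 * (\<nu> * (1 + sqrt (2 * ln (real (card Z) * real (card Q) * real t ^ 2)))) / (\<rho> * p) * (\<integral>\<omega>. \<sigma> (z, X \<omega>) \<partial>M) + 2 * Bf / real t ^ 2
     = 11 * cc / (\<rho> * p) * (\<integral>\<omega>. \<sigma> (z, X \<omega>) \<partial>M) + 2 * Bf / real t ^ 2"
    unfolding cc_def cp_def ..
  show ?thesis
  proof (cases "\<nu> \<le> 0")
    case True
    have s0: "\<And>w. w \<in> W \<Longrightarrow> \<nu> * \<sigma> w \<le> 0 \<and> \<nu>\<^sup>2 * pc w = 0"
    proof -
      fix w assume w: "w \<in> W"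
      show "\<nu> * \<sigma> w \<le> 0 \<and> \<nu>\<^sup>2 * pc w = 0"
      proof (cases "\<nu> = 0")
        case False
        then have "\<nu> < 0" using True by simp
        then have "0 \<le> pc w" using var0[OF w] by (simp add: zero_le_mult_iff)
        then have "0 \<le> \<sigma> w" unfolding sig by simp
        moreover have "0 \<le> \<nu> * \<sigma> w" using Ef[OF w] by linarith
        ultimately have "\<sigma> w = 0" using \<open>\<nu> < 0\<close> by (simp add: zero_le_mult_iff)
        then have "pc w = 0" unfolding sig using \<open>0 \<le> pc w\<close> by simp
        then show ?thesis using \<open>\<sigma> w = 0\<close> by simp
      qed simp
    qed
    have mueq: "\<And>w. w \<in> W \<Longrightarrow> \<mu> w = \<rho> * g w" using Ef s0 by force
    have AEw: "\<And>x. x \<in> Q \<Longrightarrow> AE \<omega> in M. G \<omega> (z, x) = \<mu> (z, x)"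
      using gp1[OF zx] s0[OF zx] unfolding gaussian_rv_def by auto
    have "AE \<omega> in M. \<forall>x\<in>Q. G \<omega> (z, x) = \<mu> (z, x)"
      by (rule AE_finite_allI[OF \<open>finite Q\<close>]) (rule AEw)
    then have AE0: "AE \<omega> in M. g (z, xstar) - g (z, X \<omega>) = 0"
      using AE_space
    proof eventually_elim
      case (elim \<omega>)
      then have "\<omega> \<in> space M" by simp
      then have XQw: "X \<omega> \<in> Q" using XQ by blast
      have "G \<omega> (z, xstar) \<le> G \<omega> (z, X \<omega>)" using Xmax[OF \<open>\<omega> \<in> space M\<close> \<open>xstar \<in> Q\<close>] .
      then have "\<rho> * g (z, xstar) \<le> \<rho> * g (z, X \<omega>)"
        using elim XQw \<open>xstar \<in> Q\<close> mueq[OF zx[OF XQw]] mueq[OF zx[OF \<open>xstar \<in> Q\<close>]] by auto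
      then have "g (z, xstar) \<le> g (z, X \<omega>)" using rho0 by simp
      then show ?case using gmax[OF XQw] by simp
    qed
    have "(\<integral>\<omega>. g (z, xstar) - g (z, X \<omega>) \<partial>M) = (\<integral>\<omega>. 0 \<partial>M)"
      by (rule integral_cong_AE) (use AE0 intf[of "\<lambda>x. g (z, xstar) - g (z, x)"] in \<open>auto\<close>)
    then have L0: "(\<integral>\<omega>. g (z, xstar) - g (z, X \<omega>) \<partial>M) = 0" by simp
    have z0: "11 * cc / (\<rho> * p) * (\<integral>\<omega>. \<sigma> (z, X \<omega>) \<partial>M) = 0"
    proof (cases "\<nu> = 0")
      case False
      have "(\<integral>\<omega>. \<sigma> (z, X \<omega>) \<partial>M) = (\<integral>\<omega>. 0 \<partial>M)"
      proof (rule Bochner_Integration.integral_cong[OF refl])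
        fix \<omega> assume "\<omega> \<in> space M"
        then have "X \<omega> \<in> Q" using XQ by blast
        then have "\<nu>\<^sup>2 * pc (z, X \<omega>) = 0" using s0[OF zx] by blast
        then show "\<sigma> (z, X \<omega>) = 0" using False unfolding sig by simp
      qed
      then show ?thesis by simp
    qed (simp add: cc_def)
    show ?thesis unfolding goal_eq L0 z0 using Bf0 by simp
  next
    case False
    then have nu0: "0 < \<nu>" by simp
    have pc0: "\<And>w. w \<in> W \<Longrightarrow> 0 \<le> pc w" using var0 nu0 by (simp add: zero_le_mult_iff)
    have s0: "\<And>w. w \<in> W \<Longrightarrow> 0 \<le> \<sigma> w" unfolding sig using pc0 by simp
    have vareq: "\<And>w. w \<in> W \<Longrightarrow> \<nu>\<^sup>2 * pc w = (\<nu> * \<sigma> w)\<^sup>2"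
      unfolding sig using pc0 by (simp add: power_mult_distrib)
    have gpp: "\<And>x. x \<in> Q \<Longrightarrow> gaussian_rv M (\<lambda>\<omega>. G \<omega> (z, x)) (\<mu> (z, x)) ((\<nu> * \<sigma> (z, x))\<^sup>2)"
      using gp1[OF zx] vareq[OF zx] by simp
    have gpn: "\<And>x. x \<in> Q \<Longrightarrow> gaussian_rv M (\<lambda>\<omega>. -1 * G \<omega> (z, x)) (-1 * \<mu> (z, x)) ((\<nu> * \<sigma> (z, x))\<^sup>2)"
      using gpw[OF zx, of _ "-1"] vareq[OF zx] by simp
    have taunn: "\<And>x. x \<in> Q \<Longrightarrow> 0 \<le> \<nu> * \<sigma> (z, x)" using s0[OF zx] nu0 by simp
    have cc0: "0 \<le> cc" unfolding cc_def using nu0 cp0 by simp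
    have Es0: "0 \<le> (\<integral>\<omega>. \<sigma> (z, X \<omega>) \<partial>M)"
      by (rule integral_nonneg_AE) (use XQ s0[OF zx] in \<open>auto intro!: AE_I2\<close>)
    have gX: "\<And>\<omega>. \<omega> \<in> space M \<Longrightarrow> g (z, xstar) - g (z, X \<omega>) \<le> 2 * Bf"
    proof -
      fix \<omega> assume "\<omega> \<in> space M"
      then have "X \<omega> \<in> Q" using XQ by blast
      then show "g (z, xstar) - g (z, X \<omega>) \<le> 2 * Bf"
        using gb[OF zx[OF \<open>X \<omega> \<in> Q\<close>]] gb[OF zx[OF \<open>xstar \<in> Q\<close>]] by linarith
    qed
    have first0: "0 \<le> 11 * cc / (\<rho> * p) * (\<integral>\<omega>. \<sigma> (z, X \<omega>) \<partial>M)"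
      using cc0 rho0 p0 Es0 by simp
    show ?thesis
    proof (cases "t = 1")
      case True
      have "(\<integral>\<omega>. g (z, xstar) - g (z, X \<omega>) \<partial>M) \<le> (\<integral>\<omega>. 2 * Bf \<partial>M)"
        by (rule integral_mono) (use intf[of "\<lambda>x. g (z, xstar) - g (z, x)"] gX in auto)
      also have "\<dots> = 2 * Bf / real t ^ 2" using True by (simp add: P.prob_space)
      finally show ?thesis unfolding goal_eq using first0 by linarith
    next
      case False
      then have t2: "2 \<le> t" using \<open>t \<ge> 1\<close> by simp
      define K where "K = real (card Z) * real (card Q) * real t ^ 2"
      have t4: "4 \<le> real t ^ 2"
      proof -
        have "(2::real) ^ 2 \<le> real t ^ 2" using t2 by (intro power_mono) auto
        then show ?thesis by simp
      qed
      have cZ: "1 \<le> real (card Z)" and cQ: "1 \<le> real (card Q)" using cardZ cardQ by auto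
      have K4: "4 \<le> K"
      proof -
        have "1 * 1 \<le> real (card Z) * real (card Q)" using cZ cQ by (intro mult_mono) auto
        then have "1 * 4 \<le> (real (card Z) * real (card Q)) * real t ^ 2"
          using t4 by (intro mult_mono) auto
        then show ?thesis unfolding K_def by simp
      qed
      have lnK: "4/3 \<le> ln K"
      proof -
        have "ln (4::real) = ln 2 + ln 2" using ln_mult[of 2 2] by simp
        then have "4/3 \<le> ln (4::real)" using ln2_ge_two_thirds by linarith
        also have "ln 4 \<le> ln K" using K4 by simp
        finally show ?thesis .
      qed
      have cpK: "cp = sqrt (2 * ln K)" unfolding cp_def K_def ..
      have cpsq: "cp\<^sup>2 = 2 * ln K" unfolding cpK using lnK by simp
      have cp16: "1.6 \<le> cp" unfolding cpK using lnK by (intro real_le_rsqrt) (simp add: power2_eq_square)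
      have cppos: "0 < cp" using cp16 by simp
      have sq2pi: "2.4 \<le> sqrt (2 * pi)" using pi_gt3 by (intro real_le_rsqrt) (simp add: power2_eq_square)
      define T where "T = exp (-cp\<^sup>2/2) / (cp * sqrt (2*pi))"
      have expK: "exp (-cp\<^sup>2/2) = 1 / K"
      proof -
        have "-cp\<^sup>2/2 = - ln K" using cpsq by simp
        then show ?thesis using K4 by (simp add: exp_minus inverse_eq_divide)
      qed
      have T0: "0 \<le> T" unfolding T_def using cppos by simp
      have cps: "3.84 \<le> cp * sqrt (2*pi)"
      proof -
        have "1.6 * 2.4 \<le> cp * sqrt (2*pi)" using cp16 sq2pi by (intro mult_mono) auto
        then show ?thesis by simp
      qed
      have TK: "T * K \<le> 1 / 3.84"
      proof -
        have "T * K = 1 / (cp * sqrt (2*pi))" unfolding T_def expK using K4 by simp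
        also have "\<dots> \<le> 1 / 3.84" using cps by (intro divide_left_mono) auto
        finally show ?thesis .
      qed
      have QT: "real (card Q) * T \<le> (1 / 3.84) / real t ^ 2"
      proof -
        have "real (card Q) * T \<le> real (card Z) * (real (card Q) * T)"
          using mult_right_mono[OF cZ, of "real (card Q) * T"] T0 by simp
        also have "\<dots> = T * K / real t ^ 2" unfolding K_def using t2 by (simp add: field_simps)
        also have "\<dots> \<le> (1 / 3.84) / real t ^ 2" using TK t4 by (intro divide_right_mono) auto
        finally show ?thesis .
      qed
      have QT2: "real (card Q) * T \<le> 0.07"
      proof -
        have "(1 / 3.84) / real t ^ 2 \<le> (1 / 3.84) / 4" using t4 t2 by (intro divide_left_mono) auto
        then show ?thesis using QT by simp
      qed
      have QT3: "real (card Q) * T + T \<le> 1 / real t ^ 2"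
      proof -
        have "T \<le> real (card Q) * T" using cQ T0 by (simp add: mult_le_cancel_right1)
        then have "real (card Q) * T + T \<le> 2 * ((1 / 3.84) / real t ^ 2)" using QT by linarith
        also have "\<dots> \<le> 1 / real t ^ 2" using t2 by (simp add: field_simps)
        finally show ?thesis .
      qed
      have Ef2: "\<And>w. w \<in> W \<Longrightarrow> \<mu> w - \<nu> * \<sigma> w \<le> \<rho> * g w \<and> \<rho> * g w \<le> \<mu> w + \<nu> * \<sigma> w"
      proof -
        fix w assume w: "w \<in> W"
        have "\<mu> w - \<rho> * g w \<le> \<nu> * \<sigma> w \<and> - (\<mu> w - \<rho> * g w) \<le> \<nu> * \<sigma> w"
          using Ef[OF w] by (simp only: abs_le_iff)
        then show "\<mu> w - \<nu> * \<sigma> w \<le> \<rho> * g w \<and> \<rho> * g w \<le> \<mu> w + \<nu> * \<sigma> w" by linarith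
      qed
      define U where "U = {x\<in>Q. \<rho> * (g (z, xstar) - g (z, x)) \<le> cc * \<sigma> (z, x)}"
      have xsU: "xstar \<in> U" unfolding U_def using \<open>xstar \<in> Q\<close> cc0 s0[OF zx[OF \<open>xstar \<in> Q\<close>]] by simp
      have finU: "finite U" unfolding U_def using \<open>finite Q\<close> by simp
      define xb where "xb = arg_min_on (\<lambda>x. \<sigma> (z, x)) U"
      have xbU: "xb \<in> U" unfolding xb_def using arg_min_if_finite(1)[OF finU] xsU by blast
      have xbmin: "\<And>x. x \<in> U \<Longrightarrow> \<sigma> (z, xb) \<le> \<sigma> (z, x)"
        unfolding xb_def using arg_min_if_finite(2)[OF finU, of "\<lambda>x. \<sigma> (z, x)"] xsU by force
      have xbQ: "xb \<in> Q" using xbU unfolding U_def by simp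
      define Up where "Up x = {\<omega>\<in>space M. \<mu> (z, x) + cp * (\<nu> * \<sigma> (z, x)) < G \<omega> (z, x)}" for x
      define Lo where "Lo = {\<omega>\<in>space M. -1 * \<mu> (z, xb) + cp * (\<nu> * \<sigma> (z, xb)) < -1 * G \<omega> (z, xb)}"
      define Aev where "Aev = {\<omega>\<in>space M. \<mu> (z, xstar) + \<nu> * \<sigma> (z, xstar) \<le> G \<omega> (z, xstar)}"
      define Bad1 where "Bad1 = (\<Union>x\<in>Q. Up x)"
      define Bad where "Bad = Bad1 \<union> Lo"
      define EU where "EU = {\<omega>\<in>space M. X \<omega> \<in> U}"
      have Up_sets: "\<And>x. x \<in> Q \<Longrightarrow> Up x \<in> sets M"
        unfolding Up_def by (rule sets_less[OF Gm[OF zx]])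
      have Lo_sets: "Lo \<in> sets M"
        unfolding Lo_def by (rule sets_less) (use gpn[OF xbQ] in \<open>simp add: gaussian_rv_def\<close>)
      have Aev_sets: "Aev \<in> sets M"
        unfolding Aev_def by (rule sets_le[OF Gm[OF zx[OF \<open>xstar \<in> Q\<close>]]])
      have Bad1_sets: "Bad1 \<in> sets M" unfolding Bad1_def using Up_sets \<open>finite Q\<close> by auto
      have Bad_sets: "Bad \<in> sets M" unfolding Bad_def using Bad1_sets Lo_sets by auto
      have EU_sets: "EU \<in> sets M"
      proof -
        have "X -` U \<inter> space M \<in> sets M" by (rule measurable_sets[OF Xm]) simp
        moreover have "X -` U \<inter> space M = EU" unfolding EU_def by auto
        ultimately show ?thesis by simp
      qed
      have Up_le: "\<And>x. x \<in> Q \<Longrightarrow> measure M (Up x) \<le> T"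
        unfolding Up_def T_def by (rule gauss_upper[OF \<open>prob_space M\<close> gpp taunn cppos])
      have Lo_le: "measure M Lo \<le> T"
        unfolding Lo_def T_def by (rule gauss_upper[OF \<open>prob_space M\<close> gpn[OF xbQ] taunn[OF xbQ] cppos])
      have Aev_ge: "0.088 \<le> measure M Aev"
        unfolding Aev_def by (rule gauss_anti[OF \<open>prob_space M\<close> gpp[OF \<open>xstar \<in> Q\<close>] taunn[OF \<open>xstar \<in> Q\<close>]])
      have Bad1_le: "measure M Bad1 \<le> real (card Q) * T"
      proof -
        have "measure M Bad1 \<le> (\<Sum>x\<in>Q. measure M (Up x))" unfolding Bad1_def
          by (rule P.finite_measure_subadditive_finite) (use \<open>finite Q\<close> Up_sets in auto)
        also have "\<dots> \<le> real (card Q) * T" by (rule sum_bounded_above) (rule Up_le)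
        finally show ?thesis .
      qed
      have Bad_le: "measure M Bad \<le> 1 / real t ^ 2"
      proof -
        have "measure M Bad \<le> measure M Bad1 + measure M Lo" unfolding Bad_def
          by (rule measure_subadditive) (use Bad1_sets Lo_sets in auto)
        then show ?thesis using Bad1_le Lo_le QT3 by linarith
      qed
      \<comment> \<open>(i) optimism with constant probability\<close>
      have AsubU: "Aev \<subseteq> EU \<union> Bad1"
      proof
        fix \<omega> assume A: "\<omega> \<in> Aev"
        then have sp: "\<omega> \<in> space M" unfolding Aev_def by simp
        show "\<omega> \<in> EU \<union> Bad1"
        proof (cases "\<omega> \<in> Bad1")
          case False
          define x where "x = X \<omega>"
          have xQ: "x \<in> Q" unfolding x_def using XQ sp by blast
          have nU: "G \<omega> (z, x) \<le> \<mu> (z, x) + cp * (\<nu> * \<sigma> (z, x))"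
            using False xQ sp unfolding Bad1_def Up_def by auto
          have a1: "\<mu> (z, xstar) + \<nu> * \<sigma> (z, xstar) \<le> G \<omega> (z, xstar)" using A unfolding Aev_def by simp
          have a2: "G \<omega> (z, xstar) \<le> G \<omega> (z, x)" unfolding x_def by (rule Xmax[OF sp \<open>xstar \<in> Q\<close>])
          have a3: "\<mu> (z, x) \<le> \<rho> * g (z, x) + \<nu> * \<sigma> (z, x)" using Ef2[OF zx[OF xQ]] by linarith
          have a4: "\<rho> * g (z, xstar) \<le> \<mu> (z, xstar) + \<nu> * \<sigma> (z, xstar)" using Ef2[OF zx[OF \<open>xstar \<in> Q\<close>]] by linarith
          have a5: "cc * \<sigma> (z, x) = \<nu> * \<sigma> (z, x) + cp * (\<nu> * \<sigma> (z, x))" unfolding cc_def by (simp add: algebra_simps)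
          have "\<rho> * (g (z, xstar) - g (z, x)) \<le> cc * \<sigma> (z, x)"
            using nU a1 a2 a3 a4 a5 by (simp add: right_diff_distrib)
          then have "x \<in> U" unfolding U_def using xQ by simp
          then show ?thesis unfolding EU_def x_def using sp by simp
        qed simp
      qed
      have EU_ge: "0.018 \<le> measure M EU"
      proof -
        have "measure M Aev \<le> measure M (EU \<union> Bad1)"
          by (rule P.finite_measure_mono[OF AsubU]) (use EU_sets Bad1_sets in auto)
        also have "\<dots> \<le> measure M EU + measure M Bad1"
          by (rule measure_subadditive) (use EU_sets Bad1_sets in auto)
        moreover have n1: "(0.088::real) = 0.018 + 0.07" by simp
        ultimately show ?thesis using Aev_ge Bad1_le QT2 by linarith
      qed
      define Es where "Es = (\<integral>\<omega>. \<sigma> (z, X \<omega>) \<partial>M)"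
      define sb where "sb = \<sigma> (z, xb)"
      have sb0: "0 \<le> sb" unfolding sb_def using s0[OF zx[OF xbQ]] .
      have intEU: "integrable M (indicator EU :: _ \<Rightarrow> real)"
        by (rule integrable_real_indicator[OF EU_sets]) (simp add: less_top[symmetric])
      have intBad: "integrable M (indicator Bad :: _ \<Rightarrow> real)"
        by (rule integrable_real_indicator[OF Bad_sets]) (simp add: less_top[symmetric])
      have "(\<integral>\<omega>. sb * indicator EU \<omega> \<partial>M) \<le> Es"
        unfolding Es_def
      proof (rule integral_mono)
        show "integrable M (\<lambda>\<omega>. sb * indicator EU \<omega>)" using intEU by simp
        show "integrable M (\<lambda>\<omega>. \<sigma> (z, X \<omega>))" by (rule intf)
        fix \<omega> assume sp: "\<omega> \<in> space M"
        then have "X \<omega> \<in> Q" using XQ by blast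
        show "sb * indicator EU \<omega> \<le> \<sigma> (z, X \<omega>)"
        proof (cases "\<omega> \<in> EU")
          case True
          then have "X \<omega> \<in> U" unfolding EU_def by simp
          then show ?thesis using True xbmin unfolding sb_def by simp
        qed (use s0[OF zx[OF \<open>X \<omega> \<in> Q\<close>]] in simp)
      qed
      moreover have "(\<integral>\<omega>. sb * indicator EU \<omega> \<partial>M) = sb * measure M EU"
        using EU_sets by (simp add: Int_absorb2 sets.sets_into_space)
      ultimately have sbEs: "sb * 0.018 \<le> Es"
        using EU_ge sb0 by (smt (verit) mult_left_mono)
      have pw: "\<And>\<omega>. \<omega> \<in> space M \<Longrightarrow> \<rho> * (g (z, xstar) - g (z, X \<omega>))
          \<le> 2 * cc * sb + cc * \<sigma> (z, X \<omega>) + 2 * \<rho> * Bf * indicator Bad \<omega>"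
      proof -
        fix \<omega> assume sp: "\<omega> \<in> space M"
        define x where "x = X \<omega>"
        have xQ: "x \<in> Q" unfolding x_def using XQ sp by blast
        have ccs: "0 \<le> cc * \<sigma> (z, x)" using cc0 s0[OF zx[OF xQ]] by simp
        have ccb: "0 \<le> cc * sb" using cc0 sb0 by simp
        show "\<rho> * (g (z, xstar) - g (z, X \<omega>)) \<le> 2 * cc * sb + cc * \<sigma> (z, X \<omega>) + 2 * \<rho> * Bf * indicator Bad \<omega>"
        proof (cases "\<omega> \<in> Bad")
          case True
          have "\<rho> * (g (z, xstar) - g (z, X \<omega>)) \<le> \<rho> * (2 * Bf)"
            using gX[OF sp] rho0 by (intro mult_left_mono) auto
          then show ?thesis using True ccs ccb unfolding x_def by simp
        next
          case False
          have nU: "G \<omega> (z, x) \<le> \<mu> (z, x) + cp * (\<nu> * \<sigma> (z, x))"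
            using False xQ sp unfolding Bad_def Bad1_def Up_def by auto
          have nL: "\<mu> (z, xb) - cp * (\<nu> * \<sigma> (z, xb)) \<le> G \<omega> (z, xb)"
            using False sp unfolding Bad_def Lo_def by auto
          have b1: "G \<omega> (z, xb) \<le> G \<omega> (z, x)" unfolding x_def by (rule Xmax[OF sp xbQ])
          have b2: "\<rho> * g (z, xb) \<le> \<mu> (z, xb) + \<nu> * \<sigma> (z, xb)" using Ef2[OF zx[OF xbQ]] by linarith
          have b3: "\<mu> (z, x) - \<nu> * \<sigma> (z, x) \<le> \<rho> * g (z, x)" using Ef2[OF zx[OF xQ]] by linarith
          have b4: "\<rho> * (g (z, xstar) - g (z, xb)) \<le> cc * \<sigma> (z, xb)" using xbU unfolding U_def by simp
          have b5: "cc * \<sigma> (z, x) = \<nu> * \<sigma> (z, x) + cp * (\<nu> * \<sigma> (z, x))" unfolding cc_def by (simp add: algebra_simps)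
          have b6: "cc * \<sigma> (z, xb) = \<nu> * \<sigma> (z, xb) + cp * (\<nu> * \<sigma> (z, xb))" unfolding cc_def by (simp add: algebra_simps)
          have "\<rho> * (g (z, xstar) - g (z, x)) \<le> 2 * cc * sb + cc * \<sigma> (z, x)"
            using nU nL b1 b2 b3 b4 b5 b6 unfolding sb_def by (simp add: right_diff_distrib)
          then show ?thesis using False unfolding x_def by simp
        qed
      qed
      have intR1: "integrable M (\<lambda>\<omega>. 2 * cc * sb + cc * \<sigma> (z, X \<omega>))"
        by (rule intf[of "\<lambda>x. 2 * cc * sb + cc * \<sigma> (z, x)"])
      have intR2: "integrable M (\<lambda>\<omega>. 2 * \<rho> * Bf * indicator Bad \<omega>)" using intBad by simp
      have "(\<integral>\<omega>. \<rho> * (g (z, xstar) - g (z, X \<omega>)) \<partial>M)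
          \<le> (\<integral>\<omega>. (2 * cc * sb + cc * \<sigma> (z, X \<omega>)) + 2 * \<rho> * Bf * indicator Bad \<omega> \<partial>M)"
        by (rule integral_mono) (use intf[of "\<lambda>x. \<rho> * (g (z, xstar) - g (z, x))"] intR1 intR2 pw in auto)
      also have "\<dots> = (\<integral>\<omega>. 2 * cc * sb + cc * \<sigma> (z, X \<omega>) \<partial>M) + (\<integral>\<omega>. 2 * \<rho> * Bf * indicator Bad \<omega> \<partial>M)"
        by (rule Bochner_Integration.integral_add[OF intR1 intR2])
      also have "(\<integral>\<omega>. 2 * cc * sb + cc * \<sigma> (z, X \<omega>) \<partial>M) = 2 * cc * sb + cc * Es"
      proof -
        have "(\<integral>\<omega>. 2 * cc * sb + cc * \<sigma> (z, X \<omega>) \<partial>M) = (\<integral>\<omega>. 2 * cc * sb \<partial>M) + (\<integral>\<omega>. cc * \<sigma> (z, X \<omega>) \<partial>M)"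
          by (rule Bochner_Integration.integral_add) (use intf[of "\<lambda>x. cc * \<sigma> (z, x)"] in auto)
        then show ?thesis unfolding Es_def by (simp add: P.prob_space)
      qed
      also have "(\<integral>\<omega>. 2 * \<rho> * Bf * indicator Bad \<omega> \<partial>M) = 2 * \<rho> * Bf * measure M Bad"
        using Bad_sets by (simp add: Int_absorb2 sets.sets_into_space)
      finally have main: "\<rho> * (\<integral>\<omega>. g (z, xstar) - g (z, X \<omega>) \<partial>M) \<le> 2 * cc * sb + cc * Es + 2 * \<rho> * Bf * measure M Bad"
        by simp
      have m1: "2 * \<rho> * Bf * measure M Bad \<le> 2 * \<rho> * Bf * (1 / real t ^ 2)"
        using Bad_le rho0 Bf0 by (intro mult_left_mono) auto
      have m2: "2 * cc * sb \<le> (1000/9) * (cc * Es)"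
      proof -
        have "cc * (sb * 0.018) \<le> cc * Es" using sbEs cc0 by (rule mult_left_mono)
        then show ?thesis by (simp add: algebra_simps)
      qed
      have pbig: "1000/9 + 1 \<le> 11 / p"
      proof -
        have e2: "2 \<le> exp (1::real)" using exp_ge_add_one_self[of 1] by simp
        have spi: "1.7 \<le> sqrt pi" using pi_gt3 by (intro real_le_rsqrt) (simp add: power2_eq_square)
        have "2 * 1.7 \<le> exp 1 * sqrt pi" using e2 spi by (intro mult_mono) auto
        moreover have "11 / p = 44 * (exp 1 * sqrt pi)" unfolding p_def by simp
        ultimately show ?thesis by simp
      qed
      have m3: "(1000/9 + 1) * (cc * Es) \<le> 11 / p * (cc * Es)"
        using pbig cc0 Es0 unfolding Es_def by (intro mult_right_mono) auto
      have "\<rho> * (\<integral>\<omega>. g (z, xstar) - g (z, X \<omega>) \<partial>M) \<le> \<rho> * (11 * cc / (\<rho> * p) * Es + 2 * Bf / real t ^ 2)"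
      proof -
        have "\<rho> * (11 * cc / (\<rho> * p) * Es + 2 * Bf / real t ^ 2) = 11 / p * (cc * Es) + 2 * \<rho> * Bf * (1 / real t ^ 2)"
          using rho0 p0 by (simp add: field_simps)
        then show ?thesis by (rule lin_comb[OF main m1 m2 m3])
      qed
      then have "(\<integral>\<omega>. g (z, xstar) - g (z, X \<omega>) \<partial>M) \<le> 11 * cc / (\<rho> * p) * Es + 2 * Bf / real t ^ 2"
        using rho0 by simp
      then show ?thesis unfolding goal_eq Es_def .
    qed
  qed
qed

end
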